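(* Let $n,k,m$ be positive integers with $\frac32k<m<2k$, $2m-3k$ odd, and $\operatorname{lcm}(4m-6k,\,4k-2m)\mid n$. Then $$N_P(n,k,m)\le \frac{3k-m+1}{2}\,n.$$
   Context: Fix a finite field $\mathbb{F}_q$; $[n]=\{1,\dots,n\}$. An $(n,N,k,m)$-PIR array code over $\mathbb{F}_q$ is an $\mathbb{F}_q$-linear map $\mathbf x\in\mathbb{F}_q^n\mapsto(\mathbf c_1,\dots,\mathbf c_m)$ with buckets $\mathbf c_\ell\in\mathbb{F}_q^{N_\ell}$, $N_\ell\ge1$ independent of $\mathbf x$, $\sum_\ell N_\ell=N$, such that for each $i\in[n]$ there is a partition of $[m]$ into $k$ sets $R_1,\dots,R_k$ such that for each $j$, $x_i$ is an $\mathbb{F}_q$-linear combination of values $f_\ell(\mathbf c_\ell)$, $\ell\in R_j$, for some linear functionals $f_\ell:\mathbb{F}_q^{N_\ell}\to\mathbb{F}_q$ (independent of $\mathbf x$). $N_P(n,k,m)$ is the minimum $N$ for which such a code exists. *)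

theory Defs
  imports Complex_Main
begin

text \<open>Vectors in F_q^n are functions nat => 'a, coordinates indexed by {1..n}.
  Buckets are indexed by {1..m}; bucket l has size Nl l, coordinates {1..Nl l}.\<close>

definition bucket :: "nat \<Rightarrow> (nat \<Rightarrow> nat \<Rightarrow> nat \<Rightarrow> 'a::field) \<Rightarrow> nat \<Rightarrow> (nat \<Rightarrow> 'a) \<Rightarrow> nat \<Rightarrow> 'a" where
  "bucket n G l x r = (\<Sum>i\<in>{1..n}. G l r i * x i)"

definition is_partition_k :: "nat \<Rightarrow> nat \<Rightarrow> (nat \<Rightarrow> nat set) \<Rightarrow> bool" where
  "is_partition_k m k R \<longleftrightarrow>
     (\<Union>j\<in>{1..k}. R j) = {1..m} \<and>
     (\<forall>j\<in>{1..k}. R j \<noteq> {}) \<and>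
     (\<forall>j\<in>{1..k}. \<forall>j'\<in>{1..k}. j \<noteq> j' \<longrightarrow> R j \<inter> R j' = {})"

definition pir_array_code ::
  "nat \<Rightarrow> nat \<Rightarrow> nat \<Rightarrow> nat \<Rightarrow> (nat \<Rightarrow> nat) \<Rightarrow> (nat \<Rightarrow> nat \<Rightarrow> nat \<Rightarrow> 'a::field) \<Rightarrow> bool" where
  "pir_array_code n N k m Nl G \<longleftrightarrow>
     (\<forall>l\<in>{1..m}. Nl l \<ge> 1) \<and> (\<Sum>l\<in>{1..m}. Nl l) = N \<and>
     (\<forall>i\<in>{1..n}. \<exists>R. is_partition_k m k R \<and>
        (\<forall>j\<in>{1..k}. \<exists>(lam :: nat \<Rightarrow> 'a) (f :: nat \<Rightarrow> nat \<Rightarrow> 'a).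
           \<forall>x :: nat \<Rightarrow> 'a.
             x i = (\<Sum>l\<in>R j. lam l * (\<Sum>r\<in>{1..Nl l}. f l r * bucket n G l x r))))"

definition N_P :: "'a::{field,finite} itself \<Rightarrow> nat \<Rightarrow> nat \<Rightarrow> nat \<Rightarrow> nat" where
  "N_P (_::'a itself) n k m =
     Inf {N. \<exists>Nl (G :: nat \<Rightarrow> nat \<Rightarrow> nat \<Rightarrow> 'a). pir_array_code n N k m Nl G}"

end

theory Submission
  imports Defs
begin



lemma bucket_cont:
  assumes "Cf l r \<subseteq> {1..n}"
  shows "bucket n (\<lambda>l r i. if i \<in> Cf l r then (1::'a::field) else 0) l x r = (\<Sum>i\<in>Cf l r. x i)"
proof -
  have "bucket n (\<lambda>l r i. if i \<in> Cf l r then (1::'a::field) else 0) l x r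
        = (\<Sum>i\<in>{1..n}. if i \<in> Cf l r then x i else 0)"
    unfolding bucket_def by (rule sum.cong) auto
  also have "\<dots> = (\<Sum>i\<in>{i\<in>{1..n}. i \<in> Cf l r}. x i)"
    by (simp add: sum.inter_filter[symmetric])
  also have "{i\<in>{1..n}. i \<in> Cf l r} = Cf l r" using assms by auto
  finally show ?thesis .
qed

lemma if10: "(if P then (1::'a::field) else 0) * x = (if P then x else 0)" by simp

lemma rec1:
  fixes B :: "(nat \<Rightarrow> 'a) \<Rightarrow> nat \<Rightarrow> nat \<Rightarrow> 'a::field"
  assumes "finite S" "l \<in> S" "r \<in> {1..Nl l}" "\<And>x. B x l r = y x"
  shows "\<exists>(lam::nat\<Rightarrow>'a) (f::nat\<Rightarrow>nat\<Rightarrow>'a). \<forall>x. y x = (\<Sum>l\<in>S. lam l * (\<Sum>r\<in>{1..Nl l}. f l r * B x l r))"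
proof (intro exI allI)
  fix x
  show "y x = (\<Sum>l'\<in>S. (if l' = l then 1 else 0) * (\<Sum>r'\<in>{1..Nl l'}. (if r' = r then 1 else 0) * B x l' r'))"
    using assms by (simp add: if10 sum.delta)
qed

lemma rec2:
  fixes B :: "(nat \<Rightarrow> 'a) \<Rightarrow> nat \<Rightarrow> nat \<Rightarrow> 'a::field"
  assumes "finite S" "l1 \<in> S" "l2 \<in> S" "l1 \<noteq> l2" "r1 \<in> {1..Nl l1}" "r2 \<in> {1..Nl l2}"
    "\<And>x. B x l1 r1 = y x + z x" "\<And>x. B x l2 r2 = z x"
  shows "\<exists>(lam::nat\<Rightarrow>'a) (f::nat\<Rightarrow>nat\<Rightarrow>'a). \<forall>x. y x = (\<Sum>l\<in>S. lam l * (\<Sum>r\<in>{1..Nl l}. f l r * B x l r))"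
proof (intro exI allI)
  fix x
  let ?g = "\<lambda>l'. (\<Sum>r'\<in>{1..Nl l'}. (if l' = l1 then (if r' = r1 then 1 else 0) else (if r' = r2 then 1 else 0)) * B x l' r')"
  have g1: "?g l1 = B x l1 r1" using assms by (simp add: if10 sum.delta)
  have g2: "?g l2 = B x l2 r2" using assms by (simp add: if10 sum.delta)
  have "(\<Sum>l'\<in>S. (if l' = l1 then 1 else if l' = l2 then -1 else 0) * ?g l')
      = (\<Sum>l'\<in>S. (if l' = l1 then ?g l1 else 0) + (if l' = l2 then - ?g l2 else 0))"
    by (rule sum.cong) (auto simp: assms(4))
  also have "\<dots> = ?g l1 - ?g l2" using assms by (simp add: sum.distrib sum.delta)
  also have "\<dots> = y x" using g1 g2 assms by simp
  finally show "y x = (\<Sum>l'\<in>S. (if l' = l1 then 1 else if l' = l2 then -1 else 0) * ?g l')" by simp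
qed

lemma part_gam:
  assumes "\<And>l. l \<in> {1..m} \<Longrightarrow> gam l \<in> {1..k}"
    "\<And>g. g \<in> {1..k} \<Longrightarrow> \<exists>l\<in>{1..m}. gam l = g"
  shows "is_partition_k m k (\<lambda>g. {l\<in>{1..m}. gam l = g})"
  unfolding is_partition_k_def using assms by fastforce



lemma modsub: assumes "(j::nat) < M" shows "((j + c) mod M + M - j) mod M = c mod M"
proof -
  have "(j + c) mod M + M - j = (j + c) mod M + (M - j)" using assms by simp
  hence "((j + c) mod M + M - j) mod M = (j + c + (M - j)) mod M"
    by (simp add: mod_add_left_eq)
  also have "j + c + (M - j) = c + M" using assms by simp
  finally show ?thesis by simp
qed

lemma odd_dvd: assumes "(2*h+1) dvd (2*(e::nat))" shows "(2*h+1) dvd e"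
proof -
  have "coprime (2*h+1) (2::nat)" by simp
  thus ?thesis using assms coprime_dvd_mult_right_iff by blast
qed

lemma L_ne: assumes "a = 2*h+1" "M = 2*a" "1 \<le> e" "e < a" "(j::nat) < M"
  shows "(j + 4*e) mod M \<noteq> j"
proof
  assume "(j + 4*e) mod M = j"
  hence "j mod M = (j + 4*e) mod M" using assms by simp
  hence "M dvd (j + 4*e - j)" using mod_eq_dvd_iff_nat by (metis le_add1)
  hence "(2*a) dvd (2*(2*e))" using assms(2) by simp
  hence "a dvd (2*e)" by (metis nat_mult_dvd_cancel_disj zero_neq_numeral)
  hence "(2*h+1) dvd e" using assms(1) odd_dvd[of h e] by blast
  hence "a dvd e" using assms(1) by blast
  moreover have "0 < e" "e < a" using assms(3,4) by auto
  ultimately show False using nat_dvd_not_less by blast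
qed

lemma L_4: assumes "M = 2*a" shows "(4*e) mod M = 2 * ((2*e) mod (a::nat))"
  using mod_mult_mult1[of 2 "2*e" a] assms by simp

lemma L_g2: assumes "a = 2*h+1" "M = 2*a" "e < a"
  shows "(((4*e) mod M) div 2 * (h+1)) mod a = (e::nat)"
proof -
  have "((4*e) mod M) div 2 = (2*e) mod a" using L_4[OF assms(2)] by simp
  hence "(((4*e) mod M) div 2 * (h+1)) mod a = ((2*e) * (h+1)) mod a"
    using mod_mult_left_eq[of "2*e" a "h+1"] by simp
  also have "(2*e) * (h+1) = e + e * a" using assms(1) by (simp add: algebra_simps)
  also have "(e + e * a) mod a = e" using assms(3) by simp
  finally show ?thesis .
qed

lemma L_even: assumes "M = 2*a" shows "even ((4*e) mod (M::nat))"
  using L_4[OF assms] by simp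

lemma L_par:
  assumes a: "a = 2*h+1" and M: "M = 2*a" and "1 \<le> e'" "e' < a" "(j::nat) < M"
    and u1: "u1 = (j + 2*e' + 1) mod M"
    and e: "e = (if e' \<le> h then e' else a - e')"
  shows "{(u1 + M - 1 - 2*e) mod M, (u1 + M - 1 + 2*e) mod M} = {j, (j + 4*e') mod M}"
proof (cases "e' \<le> h")
  case True
  hence ee: "e = e'" using e by simp
  have "u1 + M - 1 - 2*e = u1 + (M - 1 - 2*e)" using True ee a M by simp
  hence "(u1 + M - 1 - 2*e) mod M = (u1 + (M - 1 - 2*e)) mod M" by (rule arg_cong[where f="\<lambda>x. x mod M"])
  also have "\<dots> = (j + 2*e' + 1 + (M - 1 - 2*e)) mod M"
    unfolding u1 by (rule mod_add_left_eq)
  also have "j + 2*e' + 1 + (M - 1 - 2*e) = j + M" using True ee a M by simp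
  finally have 1: "(u1 + M - 1 - 2*e) mod M = j" using \<open>j < M\<close> by simp
  have "u1 + M - 1 + 2*e = u1 + (M - 1 + 2*e)" using a M by simp
  hence "(u1 + M - 1 + 2*e) mod M = (u1 + (M - 1 + 2*e)) mod M" by (rule arg_cong[where f="\<lambda>x. x mod M"])
  also have "\<dots> = (j + 2*e' + 1 + (M - 1 + 2*e)) mod M"
    unfolding u1 by (rule mod_add_left_eq)
  also have "j + 2*e' + 1 + (M - 1 + 2*e) = (j + 4*e') + M" using True ee a M by simp
  finally have 2: "(u1 + M - 1 + 2*e) mod M = (j + 4*e') mod M"
    by simp
  show ?thesis using 1 2 by simp
next
  case False
  hence ee: "e = a - e'" using e by simp
  have "u1 + M - 1 - 2*e = u1 + (M - 1 - 2*e)" using False ee a M by simp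
  hence "(u1 + M - 1 - 2*e) mod M = (u1 + (M - 1 - 2*e)) mod M" by (rule arg_cong[where f="\<lambda>x. x mod M"])
  also have "\<dots> = (j + 2*e' + 1 + (M - 1 - 2*e)) mod M"
    unfolding u1 by (rule mod_add_left_eq)
  also have "j + 2*e' + 1 + (M - 1 - 2*e) = j + 4*e'" using False ee assms by simp
  finally have 1: "(u1 + M - 1 - 2*e) mod M = (j + 4*e') mod M" .
  have "u1 + M - 1 + 2*e = u1 + (M - 1 + 2*e)" using a M by simp
  hence "(u1 + M - 1 + 2*e) mod M = (u1 + (M - 1 + 2*e)) mod M" by (rule arg_cong[where f="\<lambda>x. x mod M"])
  also have "\<dots> = (j + 2*e' + 1 + (M - 1 + 2*e)) mod M"
    unfolding u1 by (rule mod_add_left_eq)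
  also have "j + 2*e' + 1 + (M - 1 + 2*e) = j + M + M" using False ee assms by simp
  finally have 2: "(u1 + M - 1 + 2*e) mod M = j"
    using \<open>j < M\<close> by simp
  show ?thesis unfolding 1 2 by (rule insert_commute)
qed





definition contA :: "nat \<Rightarrow> nat \<Rightarrow> nat \<Rightarrow> nat \<Rightarrow> nat set" where
"contA a h u r = (if (r-1) mod (h+1) = 0 then {2*a*((r-1) div (h+1)) + u + 1}
   else {2*a*((r-1) div (h+1)) + (u + 2*a - 1 - 2*((r-1) mod (h+1))) mod (2*a) + 1,
         2*a*((r-1) div (h+1)) + (u + 2*a - 1 + 2*((r-1) mod (h+1))) mod (2*a) + 1})"

definition contB :: "nat \<Rightarrow> nat \<Rightarrow> nat \<Rightarrow> nat set" where
"contB a c r = (if c = 0 then {2*a*((r-1) div a) + (r-1) mod a + 1}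
   else if c = 1 then {2*a*((r-1) div a) + a + (r-1) mod a + 1}
   else {2*a*((r-1) div a) + (r-1) mod a + 1, 2*a*((r-1) div a) + a + (r-1) mod a + 1})"

definition cont :: "nat \<Rightarrow> nat \<Rightarrow> nat \<Rightarrow> nat \<Rightarrow> nat set" where
"cont a h l r = (if l \<le> 2*a then contA a h (l-1) r else contB a ((l - 2*a - 1) mod 3) r)"

definition NL :: "nat \<Rightarrow> nat \<Rightarrow> nat \<Rightarrow> nat \<Rightarrow> nat" where
"NL a h T l = (if l \<le> 2*a then T*(h+1) else T*a)"

definition gam :: "nat \<Rightarrow> nat \<Rightarrow> nat \<Rightarrow> nat \<Rightarrow> nat" where
"gam a h j l = (if l \<le> 2*a then
   (if odd ((l - 1 + 2*a - j) mod (2*a)) then (l - 1 + 2*a - j) mod (2*a) div 2 + 1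
    else ((l - 1 + 2*a - j) mod (2*a) div 2 * (h+1)) mod a + 1)
  else (if ((l-2*a-1) mod 3 = 0 \<and> j < a) \<or> ((l-2*a-1) mod 3 = 1 \<and> a \<le> j)
        then a + 2*((l-2*a-1) div 3) + 1 else a + 2*((l-2*a-1) div 3) + 2))"

lemma dm: "0 < (c::nat) \<Longrightarrow> e < c \<Longrightarrow> (p*c+e) div c = p \<and> (p*c+e) mod c = e" by simp

lemma contA_raw: "contA a h u (p*(h+1)+1) = {2*a*p + u + 1}"
proof -
  have "(p*(h+1)+0) div (h+1) = p \<and> (p*(h+1)+0) mod (h+1) = 0" by (rule dm) auto
  thus ?thesis unfolding contA_def by simp
qed

lemma contA_par: assumes "1 \<le> e" "e \<le> h"
  shows "contA a h u (p*(h+1)+e+1) = {2*a*p + (u + 2*a - 1 - 2*e) mod (2*a) + 1,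
         2*a*p + (u + 2*a - 1 + 2*e) mod (2*a) + 1}"
proof -
  have "(p*(h+1)+e) div (h+1) = p \<and> (p*(h+1)+e) mod (h+1) = e" by (rule dm) (use assms in auto)
  thus ?thesis unfolding contA_def using assms by simp
qed

lemma contB_eq: assumes "t < a"
  shows "contB a c (p*a+t+1) = (if c = 0 then {2*a*p + t + 1}
   else if c = 1 then {2*a*p + a + t + 1}
   else {2*a*p + t + 1, 2*a*p + a + t + 1})"
proof -
  have d: "(p*a+t) div a = p" and m: "(p*a+t) mod a = t" using assms by auto
  show ?thesis unfolding contB_def using d m by simp
qed

lemma in_range: assumes "p < T" "(u::nat) < 2*a" shows "2*a*p + u + 1 \<in> {1..2*a*T}"
proof -
  have "2*a*p + u + 1 \<le> 2*a*(p+1)" using assms by simp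
  also have "\<dots> \<le> 2*a*T" using assms by (intro mult_left_mono) auto
  finally show ?thesis by simp
qed

lemma coord_range: assumes "p < T" "e < (c::nat)" shows "p*c+e+1 \<in> {1..T*c}"
proof -
  have "p*c+e+1 \<le> (p+1)*c" using assms by simp
  also have "\<dots> \<le> T*c" using assms by (intro mult_right_mono) auto
  finally show ?thesis by simp
qed

lemma bucket_single:
  assumes "cont a h l r = {i}" "i \<in> {1..n}"
  shows "bucket n (\<lambda>l r i. if i \<in> cont a h l r then (1::'a::field) else 0) l x r = x i"
  using bucket_cont[of "cont a h" l r n x] assms by simp

lemma bucket_pair:
  assumes "cont a h l r = {i, v}" "i \<in> {1..n}" "v \<in> {1..n}" "i \<noteq> v"
  shows "bucket n (\<lambda>l r i. if i \<in> cont a h l r then (1::'a::field) else 0) l x r = x i + x v"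
  using bucket_cont[of "cont a h" l r n x] assms by simp

lemma gam_range:
  assumes "a = 2*h+1" "l \<in> {1..2*a+3*b}"
  shows "gam a h j l \<in> {1..a+2*b}"
proof (cases "l \<le> 2*a")
  case True
  have a0: "0 < a" using assms by simp
  define ov where "ov = (l - 1 + 2*a - j) mod (2*a)"
  define w where "w = (ov div 2 * (h+1)) mod a"
  have g: "gam a h j l = (if odd ov then ov div 2 + 1 else w + 1)"
    using True unfolding gam_def ov_def w_def by simp
  have "ov < 2*a" using a0 unfolding ov_def by simp
  hence "ov div 2 < a" by simp
  moreover have "w < a" using a0 unfolding w_def by simp
  ultimately show ?thesis unfolding g by auto
next
  case False
  have "(l-2*a-1) div 3 < b" using False assms by auto
  thus ?thesis using False unfolding gam_def by auto
qed




lemma idx: assumes "i \<in> {1..n}" "n = 2*a*T" "0 < (a::nat)"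
  shows "i = 2*a*((i-1) div (2*a)) + (i-1) mod (2*a) + 1" "(i-1) mod (2*a) < 2*a" "(i-1) div (2*a) < T"
proof -
  show "i = 2*a*((i-1) div (2*a)) + (i-1) mod (2*a) + 1" using assms(1) div_mult_mod_eq[of "i-1" "2*a"]
    by (simp add: mult.commute)
  show "(i-1) mod (2*a) < 2*a" using assms by simp
  have "i \<le> T * (2*a)" using assms by (simp add: mult.commute)
  moreover have "1 \<le> i" using assms by simp
  ultimately have "i - 1 < T * (2*a)" by linarith
  note less_mult_imp_div_less[OF this]
  thus "(i-1) div (2*a) < T" .
qed

lemma recA:
  fixes a h b T n m g i p j :: nat
  assumes a: "a = 2*h+1" and n: "n = 2*a*T" and i: "i = 2*a*p + j + 1"
    and jM: "j < 2*a" and pT: "p < T" and g: "g \<in> {1..a}" and m: "m = 2*a + 3*b"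
  shows "(\<exists>l\<in>{1..m}. gam a h j l = g) \<and>
    (\<exists>(lam::nat\<Rightarrow>'a::field) (f::nat\<Rightarrow>nat\<Rightarrow>'a). \<forall>x. x i =
       (\<Sum>l\<in>{l\<in>{1..m}. gam a h j l = g}. lam l * (\<Sum>r\<in>{1..NL a h T l}. f l r *
          bucket n (\<lambda>l r i. if i \<in> cont a h l r then 1 else 0) l x r)))"
proof -
  let ?S = "{l\<in>{1..m}. gam a h j l = g}"
  let ?B = "\<lambda>x l r. bucket n (\<lambda>l r i. if i \<in> cont a h l r then (1::'a) else 0) l x r"
  have fin: "finite ?S" by simp
  have a0: "0 < a" using a by simp
  have iR: "i \<in> {1..n}" using in_range[OF pT jM] i n by simp
  show ?thesis
  proof (cases "g = 1")
    case True
    have gl: "gam a h j (j+1) = g" using True jM unfolding gam_def by simp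
    have lS: "j+1 \<in> ?S" using gl jM m by simp
    have r: "p*(h+1)+1 \<in> {1..NL a h T (j+1)}" using coord_range[OF pT, of 0 "h+1"] jM
      unfolding NL_def by simp
    have "cont a h (j+1) (p*(h+1)+1) = contA a h j (p*(h+1)+1)" using jM unfolding cont_def by simp
    also have "\<dots> = {i}" by (simp only: contA_raw i)
    finally have c: "cont a h (j+1) (p*(h+1)+1) = {i}" .
    have "\<exists>(lam::nat\<Rightarrow>'a) (f::nat\<Rightarrow>nat\<Rightarrow>'a). \<forall>x. x i =
       (\<Sum>l\<in>?S. lam l * (\<Sum>r\<in>{1..NL a h T l}. f l r * ?B x l r))"
      by (rule rec1[where Nl="NL a h T", OF fin lS r]) (rule bucket_single[OF c iR])
    thus ?thesis using lS by blast
  next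
    case False
    define e' where "e' = g - 1"
    have e'1: "1 \<le> e'" "e' < a" using False g unfolding e'_def by auto
    have ge: "g = e' + 1" using e'1 unfolding e'_def by simp
    define u1 where "u1 = (j + 2*e' + 1) mod (2*a)"
    define u2 where "u2 = (j + 4*e') mod (2*a)"
    define e where "e = (if e' \<le> h then e' else a - e')"
    have e1: "1 \<le> e" "e \<le> h" using e'1 a unfolding e_def by auto
    have u1M: "u1 < 2*a" and u2M: "u2 < 2*a" using a0 unfolding u1_def u2_def by auto
    have o1: "(u1 + 1 - 1 + 2*a - j) mod (2*a) = 2*e' + 1"
      using modsub[OF jM, of "2*e'+1"] e'1 unfolding u1_def by (simp add: add.assoc)
    have o2: "(u2 + 1 - 1 + 2*a - j) mod (2*a) = (4*e') mod (2*a)"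
      using modsub[OF jM, of "4*e'"] unfolding u2_def by simp
    have ev: "even ((4*e') mod (2*a))" by (rule L_even) simp
    have gw: "((4*e') mod (2*a) div 2 * (h+1)) mod a = e'" by (rule L_g2[OF a _ e'1(2)]) simp
    have g1: "gam a h j (u1+1) = g" using u1M o1 unfolding gam_def ge by simp
    have g2: "gam a h j (u2+1) = g" using u2M o2 ev gw unfolding gam_def ge by simp
    have l1S: "u1+1 \<in> ?S" using g1 u1M m by simp
    have l2S: "u2+1 \<in> ?S" using g2 u2M m by simp
    have neq: "u1 + 1 \<noteq> u2 + 1"
    proof
      assume "u1 + 1 = u2 + 1"
      hence "2*e'+1 = (4*e') mod (2*a)" using o1 o2 by simp
      hence "odd ((4*e') mod (2*a))" by (metis even_Suc even_mult_iff even_numeral Suc_eq_plus1)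
      thus False using ev by simp
    qed
    have r1: "p*(h+1)+e+1 \<in> {1..NL a h T (u1+1)}" using coord_range[OF pT, of e "h+1"] e1 u1M
      unfolding NL_def by simp
    have r2: "p*(h+1)+1 \<in> {1..NL a h T (u2+1)}" using coord_range[OF pT, of 0 "h+1"] u2M
      unfolding NL_def by simp
    have par: "{(u1 + 2*a - 1 - 2*e) mod (2*a), (u1 + 2*a - 1 + 2*e) mod (2*a)} = {j, u2}"
      using L_par[OF a refl e'1 jM u1_def e_def] unfolding u2_def .
    define v where "v = 2*a*p + u2 + 1"
    have vR: "v \<in> {1..n}" using in_range[OF pT u2M] n unfolding v_def by simp
    have iv: "i \<noteq> v" using L_ne[OF a refl e'1 jM] i unfolding v_def u2_def by simp
    have "cont a h (u1+1) (p*(h+1)+e+1) = contA a h u1 (p*(h+1)+e+1)" using u1M unfolding cont_def by simp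
    also have "\<dots> = (\<lambda>z. 2*a*p + z + 1) ` {(u1 + 2*a - 1 - 2*e) mod (2*a), (u1 + 2*a - 1 + 2*e) mod (2*a)}"
      by (simp only: contA_par[OF e1] image_insert image_empty)
    also have "\<dots> = {i, v}" unfolding par using i v_def by simp
    finally have c1: "cont a h (u1+1) (p*(h+1)+e+1) = {i, v}" .
    have "cont a h (u2+1) (p*(h+1)+1) = contA a h u2 (p*(h+1)+1)" using u2M unfolding cont_def by simp
    also have "\<dots> = {v}" by (simp only: contA_raw v_def)
    finally have c2: "cont a h (u2+1) (p*(h+1)+1) = {v}" .
    have "\<exists>(lam::nat\<Rightarrow>'a) (f::nat\<Rightarrow>nat\<Rightarrow>'a). \<forall>x. x i =
       (\<Sum>l\<in>?S. lam l * (\<Sum>r\<in>{1..NL a h T l}. f l r * ?B x l r))"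
      by (rule rec2[where Nl="NL a h T" and z="\<lambda>x. x v", OF fin l1S l2S neq r1 r2])
         (rule bucket_pair[OF c1 iR vR iv], rule bucket_single[OF c2 vR])
    thus ?thesis using l1S by blast
  qed
qed




lemma cont_at: assumes "c < 3" "t < a"
  shows "cont a h (2*a+3*q+1+c) (p*a+t+1) = (if c = 0 then {2*a*p + t + 1}
   else if c = 1 then {2*a*p + a + t + 1}
   else {2*a*p + t + 1, 2*a*p + a + t + 1})"
proof -
  have "cont a h (2*a+3*q+1+c) (p*a+t+1) = contB a c (p*a+t+1)"
    using assms unfolding cont_def by simp
  thus ?thesis by (simp only: contB_eq[OF assms(2)])
qed

lemma gam_at: assumes "c < 3"
  shows "gam a h j (2*a+3*q+1+c) = (if (c=0 \<and> j<a) \<or> (c=1 \<and> a\<le>j) then a+2*q+1 else a+2*q+2)"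
  using assms unfolding gam_def by simp

lemma recB:
  fixes a h b T n m g i p j :: nat
  assumes a: "a = 2*h+1" and n: "n = 2*a*T" and i: "i = 2*a*p + j + 1"
    and jM: "j < 2*a" and pT: "p < T" and g: "g \<in> {a+1..a+2*b}" and m: "m = 2*a + 3*b"
  shows "(\<exists>l\<in>{1..m}. gam a h j l = g) \<and>
    (\<exists>(lam::nat\<Rightarrow>'a::field) (f::nat\<Rightarrow>nat\<Rightarrow>'a). \<forall>x. x i =
       (\<Sum>l\<in>{l\<in>{1..m}. gam a h j l = g}. lam l * (\<Sum>r\<in>{1..NL a h T l}. f l r *
          bucket n (\<lambda>l r i. if i \<in> cont a h l r then 1 else 0) l x r)))"
proof -
  let ?S = "{l\<in>{1..m}. gam a h j l = g}"
  let ?B = "\<lambda>x l r. bucket n (\<lambda>l r i. if i \<in> cont a h l r then (1::'a) else 0) l x r"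
  have fin: "finite ?S" by simp
  have a0: "0 < a" using a by simp
  have iR: "i \<in> {1..n}" using in_range[OF pT jM] i n by simp
  define q where "q = (g - a - 1) div 2"
  define s where "s = (g - a - 1) mod 2"
  have gq: "g = a + 2*q + 1 + s" using g unfolding q_def s_def by simp
  have qb: "q < b" using g unfolding q_def by auto
  have s2: "s = 0 \<or> s = 1" unfolding s_def by auto
  define t where "t = (if j < a then j else j - a)"
  have ta: "t < a" using jM unfolding t_def by auto
  define cI where "cI = (if j < a then 0 else 1::nat)"
  define cV where "cV = (if j < a then 1 else 0::nat)"
  define v where "v = (if j < a then 2*a*p + a + t + 1 else 2*a*p + t + 1)"
  have vR: "v \<in> {1..n}" using in_range[OF pT, of "a+t" a] in_range[OF pT, of t a] ta n
    unfolding v_def by (auto simp: add.assoc)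
  have iv: "i \<noteq> v" using i ta unfolding v_def t_def by auto
  have cI: "cont a h (2*a+3*q+1+cI) (p*a+t+1) = {i}"
    using cont_at[of cI t a h q p] ta i unfolding cI_def t_def by (auto simp: add.assoc)
  have cV: "cont a h (2*a+3*q+1+cV) (p*a+t+1) = {v}"
    using cont_at[of cV t a h q p] ta unfolding cV_def v_def t_def by (auto simp: add.assoc)
  have c2: "cont a h (2*a+3*q+1+2) (p*a+t+1) = {i, v}"
    using cont_at[of 2 t a h q p] ta i unfolding v_def t_def by (auto simp: add.assoc)
  have gI: "gam a h j (2*a+3*q+1+cI) = a+2*q+1" using gam_at[of cI a h j q] unfolding cI_def by auto
  have gV: "gam a h j (2*a+3*q+1+cV) = a+2*q+2" using gam_at[of cV a h j q] unfolding cV_def by auto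
  have g2: "gam a h j (2*a+3*q+1+2) = a+2*q+2" using gam_at[of 2 a h j q] by simp
  have inm: "\<And>c. c < 3 \<Longrightarrow> 2*a+3*q+1+c \<in> {1..m}" using qb m by auto
  have cI3: "cI < 3" "cV < 3" unfolding cI_def cV_def by auto
  have r: "\<And>l. l > 2*a \<Longrightarrow> p*a+t+1 \<in> {1..NL a h T l}"
    using coord_range[OF pT ta] unfolding NL_def by simp
  from s2 show ?thesis
  proof
    assume s0: "s = 0"
    have lS: "2*a+3*q+1+cI \<in> ?S" using inm[OF cI3(1)] gI gq s0 by simp
    have "\<exists>(lam::nat\<Rightarrow>'a) (f::nat\<Rightarrow>nat\<Rightarrow>'a). \<forall>x. x i =
       (\<Sum>l\<in>?S. lam l * (\<Sum>r\<in>{1..NL a h T l}. f l r * ?B x l r))"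
      by (rule rec1[where Nl="NL a h T", OF fin lS r]) (simp, rule bucket_single[OF cI iR])
    thus ?thesis using lS by blast
  next
    assume s1: "s = 1"
    have l1S: "2*a+3*q+1+2 \<in> ?S" using inm[of 2] g2 gq s1 by simp
    have l2S: "2*a+3*q+1+cV \<in> ?S" using inm[OF cI3(2)] gV gq s1 by simp
    have neq: "2*a+3*q+1+2 \<noteq> 2*a+3*q+1+cV" unfolding cV_def by simp
    have "\<exists>(lam::nat\<Rightarrow>'a) (f::nat\<Rightarrow>nat\<Rightarrow>'a). \<forall>x. x i =
       (\<Sum>l\<in>?S. lam l * (\<Sum>r\<in>{1..NL a h T l}. f l r * ?B x l r))"
      by (rule rec2[where Nl="NL a h T" and z="\<lambda>x. x v", OF fin l1S l2S neq r r])
         (simp, simp, rule bucket_pair[OF c2 iR vR iv], rule bucket_single[OF cV vR])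
    thus ?thesis using l1S by blast
  qed
qed




lemma code_exists:
  fixes a h b T n k m :: nat
  assumes a: "a = 2*h+1" and T: "0 < T" and n: "n = 2*a*T" and k: "k = a+2*b" and m: "m = 2*a+3*b"
  shows "pir_array_code n (a*T*(a+1) + 3*a*b*T) k m (NL a h T)
           (\<lambda>l r i. if i \<in> cont a h l r then (1::'a::field) else 0)"
  unfolding pir_array_code_def
proof (intro conjI ballI)
  fix l assume "l \<in> {1..m}"
  show "1 \<le> NL a h T l" using T a unfolding NL_def by simp
next
  have "(\<Sum>l\<in>{1..m}. NL a h T l) = (\<Sum>l\<in>{1..2*a}. NL a h T l) + (\<Sum>l\<in>{2*a+1..2*a+3*b}. NL a h T l)"
    unfolding m by (rule sum.ub_add_nat) simp
  also have "(\<Sum>l\<in>{1..2*a}. NL a h T l) = (\<Sum>l\<in>{1..2*a}. T*(h+1))"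
    by (rule sum.cong) (auto simp: NL_def)
  also have "(\<Sum>l\<in>{2*a+1..2*a+3*b}. NL a h T l) = (\<Sum>l\<in>{2*a+1..2*a+3*b}. T*a)"
    by (rule sum.cong) (auto simp: NL_def)
  also have "(\<Sum>l\<in>{1..2*a}. T*(h+1)) + (\<Sum>l\<in>{2*a+1..2*a+3*b}. T*a) = 2*a*(T*(h+1)) + 3*b*(T*a)"
    by simp
  also have "\<dots> = a*T*(a+1) + 3*a*b*T" using a by (simp add: algebra_simps)
  finally show "(\<Sum>l\<in>{1..m}. NL a h T l) = a*T*(a+1) + 3*a*b*T" .
next
  fix i assume iR: "i \<in> {1..n}"
  have a0: "0 < a" using a by simp
  define p where "p = (i-1) div (2*a)"
  define j where "j = (i-1) mod (2*a)"
  have i: "i = 2*a*p + j + 1" and jM: "j < 2*a" and pT: "p < T"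
    using idx[OF iR n a0] unfolding p_def j_def by auto
  let ?R = "\<lambda>g. {l\<in>{1..m}. gam a h j l = g}"
  have rec: "\<And>g. g \<in> {1..k} \<Longrightarrow> (\<exists>l\<in>{1..m}. gam a h j l = g) \<and>
    (\<exists>(lam::nat\<Rightarrow>'a::field) (f::nat\<Rightarrow>nat\<Rightarrow>'a). \<forall>x. x i =
       (\<Sum>l\<in>?R g. lam l * (\<Sum>r\<in>{1..NL a h T l}. f l r *
          bucket n (\<lambda>l r i. if i \<in> cont a h l r then 1 else 0) l x r)))"
  proof -
    fix g assume g: "g \<in> {1..k}"
    show "?thesis g"
    proof (cases "g \<le> a")
      case True
      thus ?thesis using recA[OF a n i jM pT _ m, of g] g by simp
    next
      case False
      thus ?thesis using recB[OF a n i jM pT _ m, of g] g k by simp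
    qed
  qed
  have part: "is_partition_k m k ?R"
    by (rule part_gam) (use gam_range[OF a] m k rec in auto)
  show "\<exists>R. is_partition_k m k R \<and> (\<forall>j\<in>{1..k}. \<exists>(lam::nat\<Rightarrow>'a) (f::nat\<Rightarrow>nat\<Rightarrow>'a). \<forall>x. x i =
       (\<Sum>l\<in>R j. lam l * (\<Sum>r\<in>{1..NL a h T l}. f l r *
          bucket n (\<lambda>l r i. if i \<in> cont a h l r then 1 else 0) l x r)))"
    using part rec by blast
qed




theorem corollary4p10:
  fixes n k m :: nat
  assumes "n > 0" "k > 0" "m > 0"
    and "3 * k < 2 * m" and "m < 2 * k"
    and "odd (2 * int m - 3 * int k)"
    and "lcm (4 * int m - 6 * int k) (4 * int k - 2 * int m) dvd int n"
  shows "real (N_P TYPE('a::{field,finite}) n k m)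
           \<le> (3 * real k - real m + 1) / 2 * real n"
proof -
  define a where "a = 2*m - 3*k"
  define b where "b = 2*k - m"
  have k: "k = a + 2*b" and m: "m = 2*a + 3*b" and k3: "3*k = m + a + 3*b"
    using assms(4,5) unfolding a_def b_def by auto
  have ia: "int a = 2 * int m - 3 * int k" using assms(4) unfolding a_def by auto
  have "odd (int a)" using ia assms(6) by simp
  hence oa: "odd a" by simp
  define h where "h = a div 2"
  have a: "a = 2*h+1" using oa unfolding h_def by presburger
  have "int (2*a) = 4 * int m - 6 * int k" using ia by simp
  hence "int (2*a) dvd int n" using assms(7) by (metis dvd_lcm1 dvd_trans)
  hence d: "2*a dvd n" by (simp only: of_nat_dvd_iff)
  define T where "T = n div (2*a)"
  have n: "n = 2*a*T" using d unfolding T_def by simp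
  have T: "0 < T" using n assms(1) by (cases T) auto
  define N where "N = a*T*(a+1) + 3*a*b*T"
  have code: "pir_array_code n N k m (NL a h T)
           (\<lambda>l r i. if i \<in> cont a h l r then (1::'a) else 0)"
    unfolding N_def by (rule code_exists[OF a T n k m])
  have "N_P TYPE('a) n k m \<le> N"
    unfolding N_P_def by (rule cInf_lower) (use code in auto)
  hence le: "real (N_P TYPE('a) n k m) \<le> real N" by simp
  have "2 * N = (a + 3*b + 1) * n" unfolding N_def n by (simp add: algebra_simps)
  hence "2 * real N = real (a + 3*b + 1) * real n"
    by (metis of_nat_mult of_nat_numeral)
  hence "real N = real (a + 3*b + 1) / 2 * real n" by simp
  also have "real (a + 3*b + 1) = 3 * real k - real m + 1"
  proof -
    have "real (3*k) = real (m + a + 3*b)" using k3 by simp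
    thus ?thesis by simp
  qed
  finally show ?thesis using le by simp
qed


end
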